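(* Fix $\delta_1,\delta_2>0$ small with $\delta_1/\delta_2\in\mathbb{N}$ and $\delta_2<\delta_1^3$. There exists a function $g$ such that for all $k\in\mathbb{N}$, $\varepsilon>0$, every $m\in\mathbb{N}\cup\{\infty\}$ with $m>g(k,\varepsilon)$, and every group homomorphism $f:\ell^1(\mathbb{N}_{\le m};\mathbb{R}/\mathbb{Z})\to(\mathbb{R}/\mathbb{Z})^k$, there exists $s\in S_m$ with $|f(s)|<\varepsilon$ (i.e. $S_m$ meets the Bohr set $\{b: |f(b)|<\varepsilon\}$).
   Context: $\|x\|_{\mathbb{R}/\mathbb{Z}}$ is the distance from $x$ to the nearest integer. For $m\in\mathbb{N}$, $\ell^1(\mathbb{N}_{\le m};\mathbb{R}/\mathbb{Z})$ is the group $(\mathbb{R}/\mathbb{Z})^m$ with norm $\sum_{i\le m}\|a_i\|_{\mathbb{R}/\mathbb{Z}}$; for $m=\infty$ it is $\ell^1(\mathbb{N};\mathbb{R}/\mathbb{Z})$, the group of sequences $(a_1,a_2,\dots)$ in $\mathbb{R}/\mathbb{Z}$ with $\sum_i\|a_i\|_{\mathbb{R}/\mathbb{Z}}<\infty$ under coordinatewise addition. For $y\in(\mathbb{R}/\mathbb{Z})^k$, $|y|$ is the maximum of the $\mathbb{R}/\mathbb{Z}$-norms of its coordinates. Let $\eta_m=2^{-100m}$ for $m\in\mathbb{N}$ and $\eta_\infty=0$. $S_m$ is the set of $(a_1,a_2,\dots)\in\ell^1(\mathbb{N}_{\le m};\mathbb{R}/\mathbb{Z})$ for which there is an index $i$ with: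 (1) $a_i\in(-\delta_1-(2-\eta_m)\delta_2,\,-\delta_1+(2-\eta_m)\delta_2)\subset\mathbb{R}/\mathbb{Z}$; (2) for all $j\ne i$, $a_j\in(-(2-\eta_m)\delta_2,(2-\eta_m)\delta_2)\subset\mathbb{R}/\mathbb{Z}$; (3) $\delta_1-(2-\eta_m)\delta_2<\sum_{j\ne i}\|a_j\|_{\mathbb{R}/\mathbb{Z}}<\delta_1+(2-\eta_m)\delta_2$. *)

theory Defs
  imports "HOL-Library.Extended_Nat" Complex_Main
begin

quotient_type rz = real / "\<lambda>x y. x - y \<in> \<int>"
  morphisms rep_rz rz_of
proof (rule equivpI)
  show "reflp (\<lambda>x y :: real. x - y \<in> \<int>)" by (auto intro: reflpI)
  show "symp (\<lambda>x y :: real. x - y \<in> \<int>)"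
    by (rule sympI) (metis Ints_minus minus_diff_eq)
  show "transp (\<lambda>x y :: real. x - y \<in> \<int>)"
    by (rule transpI) (metis Ints_add diff_add_cancel add_diff_eq)
qed

instantiation rz :: ab_group_add
begin
lift_definition zero_rz :: rz is "0 :: real" .
lift_definition plus_rz :: "rz \<Rightarrow> rz \<Rightarrow> rz" is "(+) :: real \<Rightarrow> real \<Rightarrow> real"
  by (metis Ints_add add_diff_add)
lift_definition uminus_rz :: "rz \<Rightarrow> rz" is "uminus :: real \<Rightarrow> real"
  by (metis Ints_minus minus_diff_eq minus_diff_minus)
lift_definition minus_rz :: "rz \<Rightarrow> rz \<Rightarrow> rz" is "(-) :: real \<Rightarrow> real \<Rightarrow> real"
proof -
  fix a b c d :: real assume "a - b \<in> \<int>" "c - d \<in> \<int>"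
  then have "(a - b) - (c - d) \<in> \<int>" by (rule Ints_diff)
  then show "a - c - (b - d) \<in> \<int>" by (simp add: algebra_simps)
qed
instance
  by standard (transfer; simp add: algebra_simps)+
end

lift_definition rznorm :: "rz \<Rightarrow> real" is "\<lambda>x. \<bar>x - of_int (round x)\<bar>"
proof -
  fix x y :: real assume "x - y \<in> \<int>"
  then obtain n where n: "x = y + of_int n" by (metis Ints_cases add_diff_cancel_left' diff_add_cancel add.commute)
  have "round x = round y + n" unfolding n round_def
    by (metis add.commute add.left_commute floor_add_int)
  then show "\<bar>x - of_int (round x)\<bar> = \<bar>y - of_int (round y)\<bar>" using n by simp
qed

definition in_arc :: "real \<Rightarrow> real \<Rightarrow> rz \<Rightarrow> bool" where
  "in_arc c r a \<longleftrightarrow> (\<exists>x. c - r < x \<and> x < c + r \<and> a = rz_of x)"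

text \<open>Elements are sequences indexed by nat; coordinates i with enat i \<ge> m are forced to 0
  (so indices 0,...,m-1 play the role of 1,...,m). For m = \<infinity> the l^1 condition is required.\<close>
definition ell1 :: "enat \<Rightarrow> (nat \<Rightarrow> rz) set" where
  "ell1 m = {a. (\<forall>i. m \<le> enat i \<longrightarrow> a i = 0) \<and> summable (\<lambda>i. rznorm (a i))}"

definition rz_maxnorm :: "nat \<Rightarrow> (nat \<Rightarrow> rz) \<Rightarrow> real" where
  "rz_maxnorm k y = Max (insert 0 {rznorm (y i) | i. i < k})"

definition eta :: "enat \<Rightarrow> real" where
  "eta m = (case m of enat n \<Rightarrow> 2 powr (- 100 * real n) | \<infinity> \<Rightarrow> 0)"

definition S_set :: "real \<Rightarrow> real \<Rightarrow> enat \<Rightarrow> (nat \<Rightarrow> rz) set" where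
  "S_set \<delta>1 \<delta>2 m = {a \<in> ell1 m. \<exists>i. enat i < m \<and>
      in_arc (- \<delta>1) ((2 - eta m) * \<delta>2) (a i) \<and>
      (\<forall>j. j \<noteq> i \<longrightarrow> in_arc 0 ((2 - eta m) * \<delta>2) (a j)) \<and>
      \<delta>1 - (2 - eta m) * \<delta>2 < (\<Sum>j. if j = i then 0 else rznorm (a j)) \<and>
      (\<Sum>j. if j = i then 0 else rznorm (a j)) < \<delta>1 + (2 - eta m) * \<delta>2}"

definition is_hom :: "enat \<Rightarrow> nat \<Rightarrow> ((nat \<Rightarrow> rz) \<Rightarrow> (nat \<Rightarrow> rz)) \<Rightarrow> bool" where
  "is_hom m k f \<longleftrightarrow> (\<forall>a\<in>ell1 m. \<forall>b\<in>ell1 m. \<forall>i<k. f (\<lambda>j. a j + b j) i = f a i + f b i)"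

end

theory Submission imports Defs begin

lemma rznorm_rz_of: "rznorm (rz_of x) = \<bar>x - of_int (round x)\<bar>"
  by (simp add: rznorm.abs_eq)

lemma rz_of_add: "rz_of (x + y) = rz_of x + rz_of y"
  by (simp add: plus_rz.abs_eq)

lemma rz_of_diff: "rz_of (x - y) = rz_of x - rz_of y"
  by (simp add: minus_rz.abs_eq)

lemma rz_of_rep: "rz_of (rep_rz a) = a"
  by (metis Quotient3_abs_rep Quotient3_rz)

lemma rz_of_eq: "rz_of x = rz_of y \<longleftrightarrow> x - y \<in> \<int>"
  by (metis rz.abs_eq_iff)

lemma rznorm_le: "rznorm (rz_of x) \<le> \<bar>x\<bar>"
  using round_diff_minimal[of x 0] by (simp add: rznorm_rz_of)

lemma rz_surj: "\<exists>x. a = rz_of x"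
  using rz_of_rep by metis

lemma rznorm_tri: "rznorm (a + b) \<le> rznorm a + rznorm b"
proof -
  obtain x y where a: "a = rz_of x" and b: "b = rz_of y" using rz_surj by metis
  have "rznorm (a + b) = \<bar>x + y - of_int (round (x+y))\<bar>"
    by (simp add: a b rz_of_add[symmetric] rznorm_rz_of)
  also have "\<dots> \<le> \<bar>x + y - of_int (round x + round y)\<bar>" by (rule round_diff_minimal)
  also have "\<dots> \<le> \<bar>x - of_int (round x)\<bar> + \<bar>y - of_int (round y)\<bar>" by simp
  finally show ?thesis by (simp add: a b rznorm_rz_of)
qed

lemma rznorm_zero: "rznorm 0 = 0"
  by (simp add: zero_rz.abs_eq rznorm_rz_of)

lemma rznorm_sum: "rznorm (\<Sum>j\<in>J. a j) \<le> (\<Sum>j\<in>J. rznorm (a j))"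
proof (induction J rule: infinite_finite_induct)
  case (insert x F)
  then show ?case using rznorm_tri[of "a x" "sum a F"] by simp
qed (auto simp: rznorm_zero)

lemma rz_of_sum: "rz_of (\<Sum>j\<in>J. x j) = (\<Sum>j\<in>J. rz_of (x j))"
  by (induction J rule: infinite_finite_induct) (auto simp: zero_rz.abs_eq rz_of_add)

definition cell :: "nat \<Rightarrow> rz \<Rightarrow> nat" where
  "cell M a = nat \<lfloor>real M * frac (rep_rz a)\<rfloor>"

lemma cell_lt: "M > 0 \<Longrightarrow> cell M a < M"
proof -
  assume M: "M > 0"
  have "real M * frac (rep_rz a) < real M" using frac_lt_1 M by simp
  hence "\<lfloor>real M * frac (rep_rz a)\<rfloor> < int M" by (simp add: floor_less_iff)
  thus ?thesis unfolding cell_def using M by linarith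
qed

lemma cell_close:
  assumes M: "M > 0" and eq: "cell M a = cell M b"
  shows "rznorm (a - b) \<le> 1 / real M"
proof -
  define u where "u = frac (rep_rz a)"
  define v where "v = frac (rep_rz b)"
  have u0: "0 \<le> u" "0 \<le> v" by (auto simp: u_def v_def frac_ge_0)
  have ia: "int (cell M a) = \<lfloor>real M * u\<rfloor>" using u0 by (simp add: cell_def u_def)
  have ib: "int (cell M b) = \<lfloor>real M * v\<rfloor>" using u0 by (simp add: cell_def v_def)
  have fl: "\<lfloor>real M * u\<rfloor> = \<lfloor>real M * v\<rfloor>" using ia ib eq by simp
  have c1: "of_int \<lfloor>real M * u\<rfloor> \<le> real M * u \<and> real M * u < of_int (\<lfloor>real M * u\<rfloor> + 1)"
    by (rule floor_correct)
  have c2: "of_int \<lfloor>real M * v\<rfloor> \<le> real M * v \<and> real M * v < of_int (\<lfloor>real M * v\<rfloor> + 1)"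
    by (rule floor_correct)
  have c2': "of_int \<lfloor>real M * u\<rfloor> \<le> real M * v \<and> real M * v < of_int (\<lfloor>real M * u\<rfloor> + 1)"
    using c2 unfolding fl[symmetric] .
  obtain A :: real where A: "A = of_int \<lfloor>real M * u\<rfloor>" by simp
  have f4: "A \<le> real M * u" "real M * u < A + 1"
     "A \<le> real M * v" "real M * v < A + 1"
    using c1 c2' unfolding A by (simp_all only: of_int_add of_int_1)
  have "\<bar>real M * u - real M * v\<bar> < 1" unfolding abs_less_iff using f4 by linarith
  moreover have "\<bar>real M * u - real M * v\<bar> = real M * \<bar>u - v\<bar>" by (simp only: right_diff_distrib[symmetric] abs_mult abs_of_nat)
  ultimately have "real M * \<bar>u - v\<bar> < 1" by simp
  hence d: "\<bar>u - v\<bar> < 1 / real M" using M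
    by (simp add: field_simps)
  have "rz_of u = rz_of (rep_rz a)" unfolding rz_of_eq u_def frac_def by simp
  hence "rz_of u = a" by (simp add: rz_of_rep)
  moreover have "rz_of v = rz_of (rep_rz b)" unfolding rz_of_eq v_def frac_def by simp
  hence "rz_of v = b" by (simp add: rz_of_rep)
  ultimately have "a - b = rz_of (u - v)" by (simp add: rz_of_diff)
  thus ?thesis using rznorm_le[of "u-v"] d by simp
qed


definition FS :: "enat \<Rightarrow> (nat \<Rightarrow> rz) set" where
  "FS m = {a. finite {i. a i \<noteq> 0} \<and> (\<forall>i. a i \<noteq> 0 \<longrightarrow> enat i < m)}"

lemma FS_ell1: "a \<in> FS m \<Longrightarrow> a \<in> ell1 m"
  unfolding FS_def ell1_def
proof safe
  fix i assume "finite {i. a i \<noteq> 0}" "\<forall>i. a i \<noteq> 0 \<longrightarrow> enat i < m" "m \<le> enat i"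
  thus "a i = 0" by (meson leD)
next
  assume "finite {i. a i \<noteq> 0}"
  thus "summable (\<lambda>i. rznorm (a i))"
    by (rule summable_finite) (simp add: rznorm_zero)
qed

lemma FS_add: "a \<in> FS m \<Longrightarrow> b \<in> FS m \<Longrightarrow> (\<lambda>j. a j + b j) \<in> FS m"
  unfolding FS_def
proof safe
  assume "finite {i. a i \<noteq> 0}" "finite {i. b i \<noteq> 0}"
  hence "finite ({i. a i \<noteq> 0} \<union> {i. b i \<noteq> 0})" by simp
  thus "finite {i. a i + b i \<noteq> 0}" by (rule finite_subset[rotated]) auto
next
  fix i assume "\<forall>i. a i \<noteq> 0 \<longrightarrow> enat i < m" "\<forall>i. b i \<noteq> 0 \<longrightarrow> enat i < m" "a i + b i \<noteq> 0"
  thus "enat i < m" by (metis add.left_neutral add.right_neutral)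
qed

lemma FS_zero: "(\<lambda>_. 0) \<in> FS m"
  unfolding FS_def by simp

lemma FS_sum: "finite L \<Longrightarrow> (\<forall>l\<in>L. v l \<in> FS m) \<Longrightarrow> (\<lambda>t. \<Sum>l\<in>L. v l t) \<in> FS m"
proof (induction L rule: finite_induct)
  case empty then show ?case using FS_zero by simp
next
  case (insert x F)
  then show ?case using FS_add[of "v x" m "\<lambda>t. \<Sum>l\<in>F. v l t"] by simp
qed

lemma hom_zero: "is_hom m k f \<Longrightarrow> c < k \<Longrightarrow> f (\<lambda>_. 0) c = 0"
proof -
  assume h: "is_hom m k f" "c < k"
  have z: "(\<lambda>_. 0) \<in> ell1 m" using FS_ell1 FS_zero by blast
  have "\<forall>i<k. f (\<lambda>j. (0::rz) + 0) i = f (\<lambda>_. 0) i + f (\<lambda>_. 0) i"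
    by (rule bspec[OF bspec[OF h(1)[unfolded is_hom_def] z] z])
  thus ?thesis using h(2) by simp
qed

lemma hom_add: "is_hom m k f \<Longrightarrow> c < k \<Longrightarrow> a \<in> FS m \<Longrightarrow> b \<in> FS m \<Longrightarrow>
   f (\<lambda>j. a j + b j) c = f a c + f b c"
  unfolding is_hom_def using FS_ell1 by blast

lemma hom_sum: assumes "is_hom m k f" "c < k" "finite L" "\<forall>l\<in>L. v l \<in> FS m" shows
   "f (\<lambda>t. \<Sum>l\<in>L. v l t) c = (\<Sum>l\<in>L. f (v l) c)"
  using assms(3,4) proof (induction L rule: finite_induct)
  case empty then show ?case using hom_zero assms by simp
next
  case (insert x F)
  have "f (\<lambda>t. \<Sum>l\<in>insert x F. v l t) c = f (\<lambda>t. v x t + (\<Sum>l\<in>F. v l t)) c"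
    using insert by simp
  also have "\<dots> = f (v x) c + f (\<lambda>t. \<Sum>l\<in>F. v l t) c"
    using insert FS_sum[of F v m] assms by (intro hom_add) auto
  finally show ?case using insert by simp
qed

lemma maxnorm_lt: "0 < \<epsilon> \<Longrightarrow> (\<forall>i<k. rznorm (y i) < \<epsilon>) \<Longrightarrow> rz_maxnorm k y < \<epsilon>"
proof -
  assume e: "0 < \<epsilon>" and a: "\<forall>i<k. rznorm (y i) < \<epsilon>"
  have eq: "{rznorm (y i) | i. i < k} = (\<lambda>i. rznorm (y i)) ` {..<k}" by auto
  have fin: "finite (insert 0 {rznorm (y i) | i. i < k})" unfolding eq by simp
  show ?thesis unfolding rz_maxnorm_def using Max_less_iff[OF fin] e a by auto
qed

lemma pigeon:
  assumes "finite A" "finite B" "h ` A \<subseteq> B" "card A > n * card B"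
  shows "\<exists>b\<in>B. card {a\<in>A. h a = b} > n"
proof (rule ccontr)
  assume "\<not> ?thesis"
  hence le: "\<forall>b\<in>B. card {a\<in>A. h a = b} \<le> n" by auto
  have "A = (\<Union>b\<in>B. {a\<in>A. h a = b})" using assms(3) by auto
  hence "card A \<le> (\<Sum>b\<in>B. card {a\<in>A. h a = b})" using card_UN_le[OF assms(2)] by metis
  also have "\<dots> \<le> (\<Sum>b\<in>B. n)" using le by (intro sum_mono) auto
  also have "\<dots> = n * card B" by simp
  finally show False using assms(4) by simp
qed


lemma eta_lt: "enat 1 < m \<Longrightarrow> eta m < 1"
proof (cases m)
  case (enat p)
  assume "enat 1 < m"
  hence p: "p > 1" using enat by simp
  have "2 powr (- 100 * real p) < 2 powr 0" using p by (intro powr_less_mono) auto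
  thus ?thesis using enat by (simp add: eta_def)
qed (simp add: eta_def)

lemma main_fixed:
  fixes \<delta>1 \<delta>2 :: real and n :: nat and f :: "(nat \<Rightarrow> rz) \<Rightarrow> nat \<Rightarrow> rz"
  assumes d2: "0 < \<delta>2" "\<delta>2 < 1/4" and d1: "\<delta>1 = real n * \<delta>2" and n1: "n \<ge> 1"
  assumes e: "0 < \<epsilon>" and M: "M > 0" "real n / real M < \<epsilon>"
  assumes gm: "enat (n * M ^ k + 1) < m" and hom: "is_hom m k f"
  shows "\<exists>s \<in> S_set \<delta>1 \<delta>2 m. rz_maxnorm k (f s) < \<epsilon>"
proof -
  define G where "G = n * M ^ k + 1"
  define d where "d = rz_of \<delta>2"
  define e1 where "e1 = (\<lambda>(j::nat) (t::nat). if t = j then d else (0::rz))"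
  define h where "h = (\<lambda>j. map (\<lambda>t. cell M (f (e1 j) t)) [0..<k])"
  define A where "A = {..<G}"
  define B where "B = {xs. set xs \<subseteq> {..<M} \<and> length xs = k}"
  have finB: "finite B" unfolding B_def by (simp add: finite_lists_length_eq)
  have cardB: "card B = M ^ k" unfolding B_def by (simp add: card_lists_length_eq)
  have hAB: "h ` A \<subseteq> B" unfolding B_def h_def using cell_lt[OF M(1)] by auto
  have "card A > n * card B" unfolding A_def G_def cardB by simp
  then obtain b where "b \<in> B" and cF: "card {a\<in>A. h a = b} > n"
    using pigeon[of A B h n] finB hAB unfolding A_def by auto
  define F where "F = {a\<in>A. h a = b}"
  have finF: "finite F" unfolding F_def A_def by simp
  have "F \<noteq> {}" using cF unfolding F_def by (metis card.empty not_less0)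
  then obtain i where iF: "i \<in> F" by blast
  have "card (F - {i}) \<ge> n" using cF iF finF unfolding F_def[symmetric] by simp
  then obtain J where JF: "J \<subseteq> F - {i}" and cJ: "card J = n" and finJ: "finite J"
    by (metis obtain_subset_with_card_n)
  have iJ: "i \<notin> J" using JF by auto
  have FA: "F \<subseteq> A" unfolding F_def by auto
  have ltm: "enat j < m" if "j \<in> F" for j
  proof -
    have "j < G" using that FA unfolding A_def by auto
    hence "enat j < enat G" by simp
    thus ?thesis using gm unfolding G_def by (meson order.strict_trans)
  qed
  have close: "rznorm (f (e1 j) t - f (e1 i) t) \<le> 1 / real M" if "j \<in> J" "t < k" for j t
  proof -
    have "h j = h i" using that JF iF unfolding F_def by auto
    hence "h j ! t = h i ! t" by simp
    hence "cell M (f (e1 j) t) = cell M (f (e1 i) t)" using that(2) unfolding h_def by simp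
    thus ?thesis by (rule cell_close[OF M(1)])
  qed
  define s where "s = (\<lambda>t. if t = i then rz_of (- \<delta>1) else if t \<in> J then d else 0)"
  have e1FS: "e1 j \<in> FS m" if "j \<in> F" for j
    unfolding FS_def e1_def using ltm[OF that] by auto
  have sFS: "s \<in> FS m" unfolding FS_def
  proof safe
    have "{t. s t \<noteq> 0} \<subseteq> insert i J" unfolding s_def by auto
    thus "finite {t. s t \<noteq> 0}" using finJ finite_subset by blast
  next
    fix t assume "s t \<noteq> 0"
    hence "t \<in> insert i J" unfolding s_def by (auto split: if_splits)
    thus "enat t < m" using ltm iF JF by auto
  qed
  have round0: "round \<delta>2 = 0" using d2 unfolding round_def by (simp add: floor_eq_iff)
  have nd: "rznorm d = \<delta>2" unfolding d_def rznorm_rz_of round0 using d2 by simp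
  define r where "r = (2 - eta m) * \<delta>2"
  have "enat 1 < m" using gm by (metis enat_ord_simps(2) le_add2 le_less_trans linorder_not_le nat_neq_iff one_enat_def order.strict_trans1 Suc_eq_plus1 le_add1 not_less_eq_eq add.commute)
  hence et: "eta m < 1" by (rule eta_lt)
  have r: "\<delta>2 < r" using et d2 unfolding r_def by (simp add: algebra_simps)
  have sumeq: "(\<Sum>j. if j = i then 0 else rznorm (s j)) = \<delta>1"
  proof -
    have "(\<Sum>j. if j = i then 0 else rznorm (s j)) = (\<Sum>j\<in>J. if j = i then 0 else rznorm (s j))"
      by (rule suminf_finite[OF finJ]) (auto simp: s_def rznorm_zero)
    also have "\<dots> = (\<Sum>j\<in>J. \<delta>2)" using iJ by (intro sum.cong) (auto simp: s_def nd)
    also have "\<dots> = \<delta>1" using cJ d1 by simp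
    finally show ?thesis .
  qed
  have sS: "s \<in> S_set \<delta>1 \<delta>2 m"
    unfolding S_set_def r_def[symmetric]
  proof (intro CollectI conjI exI[of _ i])
    show "s \<in> ell1 m" using sFS by (rule FS_ell1)
    show "enat i < m" using ltm iF by simp
    show "in_arc (- \<delta>1) r (s i)" unfolding in_arc_def s_def using r d2 by (intro exI[of _ "-\<delta>1"]) auto
    show "\<forall>j. j \<noteq> i \<longrightarrow> in_arc 0 r (s j)"
    proof safe
      fix j assume "j \<noteq> i"
      show "in_arc 0 r (s j)"
      proof (cases "j \<in> J")
        case True thus ?thesis unfolding in_arc_def s_def d_def using r d2 \<open>j \<noteq> i\<close>
          by (intro exI[of _ "\<delta>2"]) auto
      next
        case False thus ?thesis unfolding in_arc_def s_def using r d2 \<open>j \<noteq> i\<close>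
          by (intro exI[of _ 0]) (auto simp: zero_rz_def)
      qed
    qed
    show "\<delta>1 - r < (\<Sum>j. if j = i then 0 else rznorm (s j))" using sumeq r d2 by simp
    show "(\<Sum>j. if j = i then 0 else rznorm (s j)) < \<delta>1 + r" using sumeq r d2 by simp
  qed
  define W where "W = (\<lambda>t. \<Sum>j\<in>J. e1 i t)"
  define T where "T = (\<lambda>t. \<Sum>j\<in>J. e1 j t)"
  have WFS: "W \<in> FS m" unfolding W_def using FS_sum[OF finJ, of "\<lambda>_. e1 i" m] e1FS[OF iF] by simp
  have sWT: "(\<lambda>t. s t + W t) = T"
  proof
    fix t
    show "s t + W t = T t"
    proof (cases "t = i")
      case True
      have "W t = rz_of (\<Sum>j\<in>J. \<delta>2)" unfolding W_def e1_def d_def True rz_of_sum by simp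
      hence "s t + W t = rz_of (- \<delta>1 + real n * \<delta>2)" using cJ True by (simp add: s_def rz_of_add[symmetric])
      also have "\<dots> = 0" using d1 by (simp add: zero_rz_def)
      finally show ?thesis unfolding T_def e1_def using True iJ finJ by (simp add: sum.delta)
    next
      case False
      have "W t = 0" unfolding W_def e1_def using False by simp
      moreover have "T t = (if t \<in> J then d else 0)" unfolding T_def e1_def
        using finJ by (simp add: sum.delta)
      ultimately show ?thesis using False by (simp add: s_def)
    qed
  qed
  have fs: "f s c = (\<Sum>j\<in>J. f (e1 j) c - f (e1 i) c)" if c: "c < k" for c
  proof -
    have "f T c = (\<Sum>j\<in>J. f (e1 j) c)" unfolding T_def
      using hom_sum[OF hom c finJ, of e1] e1FS JF by auto
    moreover have "f W c = (\<Sum>j\<in>J. f (e1 i) c)" unfolding W_def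
      using hom_sum[OF hom c finJ, of "\<lambda>_. e1 i"] e1FS[OF iF] by auto
    moreover have "f T c = f s c + f W c" unfolding sWT[symmetric]
      using hom_add[OF hom c sFS WFS] .
    ultimately show ?thesis by (simp add: sum_subtractf eq_diff_eq)
  qed
  have "rz_maxnorm k (f s) < \<epsilon>"
  proof (rule maxnorm_lt[OF e], safe)
    fix c assume c: "c < k"
    have "rznorm (f s c) \<le> (\<Sum>j\<in>J. rznorm (f (e1 j) c - f (e1 i) c))"
      unfolding fs[OF c] by (rule rznorm_sum)
    also have "\<dots> \<le> (\<Sum>j\<in>J. 1 / real M)" using close c by (intro sum_mono) auto
    also have "\<dots> = real n / real M" using cJ by simp
    finally show "rznorm (f s c) < \<epsilon>" using M by simp
  qed
  thus ?thesis using sS by blast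
qed


theorem mainTheorem3:
  shows "\<exists>c>0. \<forall>\<delta>1 \<delta>2 :: real. 0 < \<delta>1 \<longrightarrow> \<delta>1 < c \<longrightarrow> 0 < \<delta>2 \<longrightarrow> \<delta>2 < c \<longrightarrow>
     (\<exists>n::nat. \<delta>1 / \<delta>2 = real n) \<longrightarrow> \<delta>2 < \<delta>1 ^ 3 \<longrightarrow>
     (\<exists>g :: nat \<Rightarrow> real \<Rightarrow> nat. \<forall>k (\<epsilon>::real) (m::enat) f.
        0 < \<epsilon> \<longrightarrow> enat (g k \<epsilon>) < m \<longrightarrow> is_hom m k f \<longrightarrow>
        (\<exists>s \<in> S_set \<delta>1 \<delta>2 m. rz_maxnorm k (f s) < \<epsilon>))"
proof (intro exI[of _ "1/4::real"] conjI allI impI)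
  fix \<delta>1 \<delta>2 :: real
  assume a: "0 < \<delta>1" "\<delta>1 < 1/4" "0 < \<delta>2" "\<delta>2 < 1/4" "\<exists>n::nat. \<delta>1 / \<delta>2 = real n"
  then obtain n :: nat where n: "\<delta>1 / \<delta>2 = real n" by blast
  have d1: "\<delta>1 = real n * \<delta>2" using n a(3) by (simp add: field_simps)
  have n1: "n \<ge> 1" using d1 a(1,3) by (cases n) auto
  define MM where "MM = (\<lambda>\<epsilon>::real. nat \<lceil>real n / \<epsilon>\<rceil> + 1)"
  show "\<exists>g :: nat \<Rightarrow> real \<Rightarrow> nat. \<forall>k (\<epsilon>::real) (m::enat) f.
        0 < \<epsilon> \<longrightarrow> enat (g k \<epsilon>) < m \<longrightarrow> is_hom m k f \<longrightarrow>
        (\<exists>s \<in> S_set \<delta>1 \<delta>2 m. rz_maxnorm k (f s) < \<epsilon>)"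
  proof (intro exI[of _ "\<lambda>k \<epsilon>. n * MM \<epsilon> ^ k + 1"] allI impI)
    fix k \<epsilon> m f
    assume e: "0 < \<epsilon>" and gm: "enat (n * MM \<epsilon> ^ k + 1) < m" and hom: "is_hom m k f"
    have M0: "MM \<epsilon> > 0" unfolding MM_def by simp
    have "real n / \<epsilon> \<le> real (nat \<lceil>real n / \<epsilon>\<rceil>)" by linarith
    hence "real n / \<epsilon> < real (MM \<epsilon>)" unfolding MM_def by simp
    hence "real n < \<epsilon> * real (MM \<epsilon>)" using e by (simp add: field_simps)
    hence Mlt: "real n / real (MM \<epsilon>) < \<epsilon>" using M0 by (simp add: field_simps)
    show "\<exists>s \<in> S_set \<delta>1 \<delta>2 m. rz_maxnorm k (f s) < \<epsilon>"
      by (rule main_fixed[OF a(3,4) d1 n1 e M0 Mlt gm hom])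
  qed
qed simp

end
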